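(* Let $D_0=\mathbb{D}$ and $D_j=D_{j-1}\setminus\mathcal{Z}_{j-1}$ for $j=1,2,\dots$, where each $\mathcal{Z}_{j-1}$ is a discrete set in $D_{j-1}$. Then every $D_j$ has the $3$-rd Hindmarsh property.
   Context: $\mathbb{D}$ is the open unit disk. A set $\mathcal{Z}\subset D$ is discrete in $D$ if it is at most countable with no accumulation points in $D$. A Schur function is an analytic $S:\mathbb{D}\to\mathbb{C}$ with $|S|\le1$. Pick matrix: $P_k(f;z_1,\dots,z_k)=\left[\frac{1-f(z_i)\overline{f(z_j)}}{1-z_i\overline{z_j}}\right]_{i,j=1}^k$. For an integer $k\ge3$, an open set $D\subseteq\mathbb{D}$ has the $k$-th Hindmarsh property if every function $f:D\to\mathbb{C}$ such that $P_k(f;z_1,\dots,z_k)$ is positive semidefinite for every choice of distinct $z_1,\dots,z_k\in D$ admits an extension to a Schur function on $\mathbb{D}$. Hindmarsh's theorem (may be assumed): $\mathbb{D}$ has the $3$-rd Hindmarsh property; more precisely, if $U\subseteq\mathbb{D}$ is open and $f:U\to\mathbb{C}$ has $P_3(f;z_1,z_2,z_3)\ge0$ for all $z_1,z_2,z_3\in U$, then $f$ is analytic on $U$ with $|f|\le1$. *)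

theory Defs
  imports "HOL-Analysis.Analysis"
begin

definition pick_matrix :: "(complex \<Rightarrow> complex) \<Rightarrow> (nat \<Rightarrow> complex) \<Rightarrow> nat \<Rightarrow> nat \<Rightarrow> complex" where
  "pick_matrix f z i j = (1 - f (z i) * cnj (f (z j))) / (1 - z i * cnj (z j))"

definition psd_matrix :: "nat \<Rightarrow> (nat \<Rightarrow> nat \<Rightarrow> complex) \<Rightarrow> bool" where
  "psd_matrix k P \<longleftrightarrow> (\<forall>c :: nat \<Rightarrow> complex.
     (let q = (\<Sum>i<k. \<Sum>j<k. cnj (c i) * P i j * c j) in Im q = 0 \<and> Re q \<ge> 0))"

definition schur_function :: "(complex \<Rightarrow> complex) \<Rightarrow> bool" where
  "schur_function S \<longleftrightarrow> S holomorphic_on ball 0 1 \<and> (\<forall>z\<in>ball 0 1. norm (S z) \<le> 1)"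

definition discrete_in :: "complex set \<Rightarrow> complex set \<Rightarrow> bool" where
  "discrete_in Z D \<longleftrightarrow> Z \<subseteq> D \<and> countable Z \<and> (\<forall>x\<in>D. \<not> x islimpt Z)"

definition hindmarsh_property :: "nat \<Rightarrow> complex set \<Rightarrow> bool" where
  "hindmarsh_property k D \<longleftrightarrow> open D \<and> D \<subseteq> ball 0 1 \<and>
     (\<forall>f :: complex \<Rightarrow> complex.
        (\<forall>z :: nat \<Rightarrow> complex. (\<forall>i<k. z i \<in> D) \<and> inj_on z {..<k} \<longrightarrow> psd_matrix k (pick_matrix f z))
        \<longrightarrow> (\<exists>S. schur_function S \<and> (\<forall>w\<in>D. S w = f w)))"

end

theory Submission
  imports Defs "HOL-Complex_Analysis.Complex_Analysis"
begin

lemma sum3: "(\<Sum>i<(3::nat). F i) = F 0 + F 1 + (F 2 :: complex)"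
  by (simp add: eval_nat_numeral)

definition bform :: "(nat \<Rightarrow> nat \<Rightarrow> complex) \<Rightarrow> (nat \<Rightarrow> complex) \<Rightarrow> (nat \<Rightarrow> complex) \<Rightarrow> complex" where
  "bform P u v = (\<Sum>i<3. \<Sum>j<3. cnj (u i) * P i j * v j)"

lemma psd_bform: "psd_matrix 3 P \<Longrightarrow> Im (bform P u u) = 0 \<and> Re (bform P u u) \<ge> 0"
  unfolding psd_matrix_def bform_def Let_def by blast

lemma bform_herm:
  assumes "\<And>i j. P j i = cnj (P i j)"
  shows "bform P v u = cnj (bform P u v)"
  unfolding bform_def sum3 using assms[of 0 0] assms[of 0 1] assms[of 0 2] assms[of 1 0] assms[of 1 1]
    assms[of 1 2] assms[of 2 0] assms[of 2 1] assms[of 2 2]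
  by (simp add: algebra_simps)

lemma bform_expand:
  "bform P (\<lambda>i. u i + t * v i) (\<lambda>i. u i + t * v i) =
    bform P u u + t * bform P u v + cnj t * bform P v u + cnj t * t * bform P v v"
  unfolding bform_def sum3 by (simp add: algebra_simps)

lemma bform_CS:
  assumes psd: "psd_matrix 3 P" and herm: "\<And>i j. P j i = cnj (P i j)"
  shows "(cmod (bform P u v))^2 \<le> Re (bform P u u) * Re (bform P v v)"
proof -
  define \<beta> where "\<beta> = bform P u v"
  define A where "A = Re (bform P u u)"
  define b where "b = Re (bform P v v)"
  have bv: "bform P v v = of_real b" using psd_bform[OF psd, of v] b_def
    by (simp add: complex_eq_iff)
  have bu: "bform P u u = of_real A" using psd_bform[OF psd, of u] A_def
    by (simp add: complex_eq_iff)
  have b0: "b \<ge> 0" using psd_bform[OF psd, of v] b_def by simp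
  have key: "A - 2 * s * (cmod \<beta>)^2 + s^2 * (cmod \<beta>)^2 * b \<ge> 0" for s :: real
  proof -
    define t where "t = - of_real s * cnj \<beta>"
    have "Re (bform P (\<lambda>i. u i + t * v i) (\<lambda>i. u i + t * v i)) \<ge> 0"
      using psd_bform[OF psd] by blast
    also have "bform P (\<lambda>i. u i + t * v i) (\<lambda>i. u i + t * v i) =
        of_real A + t * \<beta> + cnj t * cnj \<beta> + cnj t * t * of_real b"
      unfolding bform_expand bform_herm[of P v u, OF herm] bu bv \<beta>_def ..
    also have "\<dots> = of_real (A - 2 * s * (cmod \<beta>)^2 + s^2 * (cmod \<beta>)^2 * b)"
      unfolding t_def using complex_norm_square[of \<beta>]
      by (simp add: algebra_simps power2_eq_square)
    finally show ?thesis by simp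
  qed
  show ?thesis
  proof (cases "b = 0")
    case True
    show ?thesis
    proof (rule ccontr)
      assume "\<not> ?thesis"
      hence pos: "(cmod \<beta>)^2 > 0" using True unfolding \<beta>_def b_def by (auto simp: not_le)
      have "A - 2 * ((A+1)/(2*(cmod \<beta>)^2)) * (cmod \<beta>)^2 \<ge> 0"
        using key[of "(A+1)/(2*(cmod \<beta>)^2)"] True by simp
      thus False using pos by (simp add: field_simps)
    qed
  next
    case False
    hence bp: "b > 0" using b0 by simp
    have "A - 2 * (1/b) * (cmod \<beta>)^2 + (1/b)^2 * (cmod \<beta>)^2 * b \<ge> 0" by (rule key)
    hence "A - (cmod \<beta>)^2 / b \<ge> 0" using bp by (simp add: field_simps power2_eq_square)
    hence "(cmod \<beta>)^2 \<le> A * b" using bp by (simp add: field_simps)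
    thus ?thesis unfolding A_def b_def \<beta>_def .
  qed
qed

lemma pick_herm: "pick_matrix f z j i = cnj (pick_matrix f z i j)"
  unfolding pick_matrix_def by (simp add: mult.commute)

lemma s1:
  fixes A B C D1 D2 D3 D4 D5 :: complex
  assumes "D1 \<noteq> 0" "D2 \<noteq> 0" "D3 \<noteq> 0" "D4 \<noteq> 0" "D5 \<noteq> 0"
  shows "(A/D1 - (B/D2)*(C/D3)/(D4/D5)) * D4 * D1 = A*D4 - (B*C*D5*D1)/(D2*D3)"
  using assms by (simp add: field_simps)
lemma s2:
  fixes X Y Z D :: complex
  assumes "D \<noteq> 0" "Z * D = X + W"
  shows "Z - W/D = X/D"
  using assms by (simp add: field_simps)
lemma key_id:
  fixes a a' z w' al al' p q' :: complex
  assumes "1 - a*a' \<noteq> 0" "1 - z*a' \<noteq> 0" "1 - a*w' \<noteq> 0" "1 - z*w' \<noteq> 0" "1 - al*al' \<noteq> 0"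
  shows "((1 - p*q')/(1 - z*w') - ((1 - p*al')/(1 - z*a')) * ((1 - al*q')/(1 - a*w')) / ((1 - al*al')/(1 - a*a'))) * (1 - al*al') * (1 - z*w')
     = ((1 - al'*p)*(z-a)/(1 - z*a')) * ((1 - al*q')*(w'-a')/(1 - a*w')) - (p - al)*(q' - al')"
proof -
  have p: "((1 - p*q')*(1 - al*al') + (p - al)*(q' - al'))*((1 - z*a')*(1 - a*w')) = (1 - al'*p)*(z-a)*(1 - al*q')*(w'-a') + (1 - p*al')*(1 - al*q')*(1 - a*a')*(1 - z*w')"
    by algebra
  have h: "((1 - p*q')*(1 - al*al') + (p - al)*(q' - al')) - ((1 - p*al')*(1 - al*q')*(1 - a*a')*(1 - z*w'))/((1 - z*a')*(1 - a*w'))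
      = ((1 - al'*p)*(z-a)*(1 - al*q')*(w'-a'))/((1 - z*a')*(1 - a*w'))"
    by (rule s2) (use assms p in auto)
  have l: "((1 - p*q')/(1 - z*w') - ((1 - p*al')/(1 - z*a')) * ((1 - al*q')/(1 - a*w')) / ((1 - al*al')/(1 - a*a'))) * (1 - al*al') * (1 - z*w')
     = (1 - p*q')*(1 - al*al') - ((1 - p*al')*(1 - al*q')*(1 - a*a')*(1 - z*w'))/((1 - z*a')*(1 - a*w'))"
    by (rule s1) (use assms in auto)
  have r: "((1 - al'*p)*(z-a)/(1 - z*a')) * ((1 - al*q')*(w'-a')/(1 - a*w')) = ((1 - al'*p)*(z-a)*(1 - al*q')*(w'-a'))/((1 - z*a')*(1 - a*w'))"
    by simp
  show ?thesis unfolding l r h[symmetric] by (simp add: algebra_simps)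
qed

lemma pure_L:
  fixes x y z w :: complex
  assumes "cmod x \<le> 1" "cmod y \<le> 1"
    and H: "(cmod (1 - x * cnj y))^2 * (1 - (cmod z)^2) * (1 - (cmod w)^2) \<le> (1 - (cmod x)^2) * (1 - (cmod y)^2) * (cmod (1 - z * cnj w))^2"
  shows "cmod (x - y) * cmod (1 - z * cnj w) \<le> 2 * cmod (z - w)"
proof -
  define c where "c = (cmod (1 - x * cnj y))^2"
  define D where "D = (cmod (1 - z * cnj w))^2"
  define E where "E = (1 - (cmod z)^2) * (1 - (cmod w)^2)"
  define F where "F = (1 - (cmod x)^2) * (1 - (cmod y)^2)"
  define G where "G = (cmod (x - y))^2"
  define K where "K = (cmod (z - w))^2"
  have I1: "c - F = G" unfolding c_def F_def G_def
    unfolding cmod_power2 by (simp add: algebra_simps power2_eq_square)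
  have I2: "D - E = K" unfolding D_def E_def K_def
    unfolding cmod_power2 by (simp add: algebra_simps power2_eq_square)
  have H': "c * E \<le> F * D" using H unfolding c_def E_def F_def D_def by (simp add: mult.assoc)
  have n: "cmod (1 - x * cnj y) \<le> 2"
  proof -
    have "cmod (1 - x * cnj y) \<le> cmod (1::complex) + cmod (x * cnj y)" by (rule norm_triangle_ineq4)
    also have "\<dots> = 1 + cmod x * cmod y" by (simp add: norm_mult)
    also have "cmod x * cmod y \<le> 1" using assms(1,2) by (simp add: mult_le_one)
    finally show ?thesis by simp
  qed
  have c4: "c \<le> 4" unfolding c_def using n power_mono[OF n, of 2] by simp
  have K0: "K \<ge> 0" unfolding K_def by simp
  have e1: "G * D = c * D - F * D" using I1 by (simp add: algebra_simps flip: I1)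
  have e2: "c * K = c * D - c * E" using I2 by (simp add: algebra_simps flip: I2)
  have "G * D \<le> c * K" using e1 e2 H' by linarith
  also have "\<dots> \<le> 4 * K" using c4 K0 by (rule mult_right_mono)
  finally have "(cmod (x - y) * cmod (1 - z * cnj w))^2 \<le> (2 * cmod (z - w))^2"
    unfolding G_def D_def K_def by (simp add: power_mult_distrib)
  thus ?thesis by (rule power2_le_imp_le) simp
qed

lemma R_ineq:
  fixes n1 n2 k d e1 e2 c A B :: real
  assumes "n1 > 0" "n2 > 0" "k > 0" "d > 0" "e1 > 0" "e2 > 0"
    and "(n1*n2*c/(k*d))^2 \<le> (n1^2*A/(k*e1))*(n2^2*B/(k*e2))"
  shows "c^2*e1*e2 \<le> A*B*d^2"
proof -
  have "(n1*n2*c/(k*d))^2 * ((k*d)^2 * (e1*e2) / (n1^2*n2^2)) \<le> (n1^2*A/(k*e1))*(n2^2*B/(k*e2)) * ((k*d)^2 * (e1*e2) / (n1^2*n2^2))"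
    using assms by (intro mult_right_mono) auto
  thus ?thesis using assms by (simp add: field_simps power2_eq_square)
qed

lemma GL:
  fixes S12 S11 S22 N1 N2 M1 M2 z w :: complex and k :: real
  assumes k: "k > 0" and z: "cmod z < 1" and w: "cmod w < 1" and zw: "1 - z * cnj w \<noteq> 0"
  and N: "N1 \<noteq> 0" "N2 \<noteq> 0"
  and CS: "(cmod S12)^2 \<le> Re S11 * Re S22" and p1: "Re S11 \<ge> 0" and p2: "Re S22 \<ge> 0"
  and e12: "S12 * of_real k * (1 - z * cnj w) = N1 * cnj N2 - M1 * cnj M2"
  and e11: "S11 * of_real k * (1 - z * cnj z) = N1 * cnj N1 - M1 * cnj M1"
  and e22: "S22 * of_real k * (1 - w * cnj w) = N2 * cnj N2 - M2 * cnj M2"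
  shows "cmod (M1/N1) \<le> 1 \<and> cmod (M2/N2) \<le> 1 \<and> (cmod (1 - (M1/N1) * cnj (M2/N2)))^2 * (1 - (cmod z)^2) * (1 - (cmod w)^2) \<le> (1 - (cmod (M1/N1))^2) * (1 - (cmod (M2/N2))^2) * (cmod (1 - z * cnj w))^2"
proof -
  define h1 where "h1 = M1/N1"
  define h2 where "h2 = M2/N2"
  have M1: "M1 = h1 * N1" and M2: "M2 = h2 * N2" using N by (simp_all add: h1_def h2_def)
  have sq: "x * cnj x = of_real ((cmod x)^2)" for x :: complex using complex_norm_square[of x] by simp
  have ez: "1 - (cmod z)^2 > 0" and ew: "1 - (cmod w)^2 > 0"
    using z w by (simp_all add: power_less_one_iff abs_square_less_1)
  have S11: "S11 = of_real ((cmod N1)^2 * (1 - (cmod h1)^2) / (k * (1 - (cmod z)^2)))"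
  proof -
    have "S11 * of_real (k * (1 - (cmod z)^2)) = of_real ((cmod N1)^2 - (cmod M1)^2)"
      using e11 unfolding sq by (simp add: algebra_simps)
    also have "(cmod M1)^2 = (cmod h1)^2 * (cmod N1)^2" unfolding M1 by (simp add: norm_mult power_mult_distrib)
    finally have "S11 * of_real (k * (1 - (cmod z)^2)) = of_real ((cmod N1)^2 * (1 - (cmod h1)^2))"
      by (simp add: algebra_simps)
    moreover have c: "of_real (k * (1 - (cmod z)^2)) \<noteq> (0::complex)" using k ez by (subst of_real_eq_0_iff) simp
    ultimately have "S11 = of_real ((cmod N1)^2 * (1 - (cmod h1)^2)) / of_real (k * (1 - (cmod z)^2))"
      by (metis nonzero_mult_div_cancel_right)
    thus ?thesis by (simp only: of_real_divide)
  qed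
  have S22: "S22 = of_real ((cmod N2)^2 * (1 - (cmod h2)^2) / (k * (1 - (cmod w)^2)))"
  proof -
    have "S22 * of_real (k * (1 - (cmod w)^2)) = of_real ((cmod N2)^2 - (cmod M2)^2)"
      using e22 unfolding sq by (simp add: algebra_simps)
    also have "(cmod M2)^2 = (cmod h2)^2 * (cmod N2)^2" unfolding M2 by (simp add: norm_mult power_mult_distrib)
    finally have "S22 * of_real (k * (1 - (cmod w)^2)) = of_real ((cmod N2)^2 * (1 - (cmod h2)^2))"
      by (simp add: algebra_simps)
    moreover have c: "of_real (k * (1 - (cmod w)^2)) \<noteq> (0::complex)" using k ew by (subst of_real_eq_0_iff) simp
    ultimately have "S22 = of_real ((cmod N2)^2 * (1 - (cmod h2)^2)) / of_real (k * (1 - (cmod w)^2))"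
      by (metis nonzero_mult_div_cancel_right)
    thus ?thesis by (simp only: of_real_divide)
  qed
  have S12: "cmod S12 = cmod N1 * cmod N2 * cmod (1 - h1 * cnj h2) / (k * cmod (1 - z * cnj w))"
  proof -
    have "S12 * of_real k * (1 - z * cnj w) = N1 * cnj N2 * (1 - h1 * cnj h2)"
      using e12 unfolding M1 M2 by (simp add: algebra_simps)
    hence "cmod S12 * k * cmod (1 - z * cnj w) = cmod N1 * cmod N2 * cmod (1 - h1 * cnj h2)"
      using k by (metis (no_types, lifting) complex_mod_cnj norm_mult norm_of_real abs_of_pos)
    thus ?thesis using k zw by (simp add: field_simps)
  qed
  have h1: "cmod h1 \<le> 1"
  proof -
    have "0 \<le> (cmod N1)^2 * (1 - (cmod h1)^2) / (k * (1 - (cmod z)^2))" using p1 S11 by simp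
    hence "0 \<le> (cmod N1)^2 * (1 - (cmod h1)^2)" using mult_pos_pos[OF k ez] by (auto simp: zero_le_divide_iff)
    hence "(cmod h1)^2 \<le> 1" using N by (simp add: zero_le_mult_iff)
    thus ?thesis by (simp add: power_le_one_iff abs_square_le_1)
  qed
  have h2: "cmod h2 \<le> 1"
  proof -
    have "0 \<le> (cmod N2)^2 * (1 - (cmod h2)^2) / (k * (1 - (cmod w)^2))" using p2 S22 by simp
    hence "0 \<le> (cmod N2)^2 * (1 - (cmod h2)^2)" using mult_pos_pos[OF k ew] by (auto simp: zero_le_divide_iff)
    hence "(cmod h2)^2 \<le> 1" using N by (simp add: zero_le_mult_iff)
    thus ?thesis by (simp add: power_le_one_iff abs_square_le_1)
  qed
  have "(cmod (1 - h1 * cnj h2))^2 * (1 - (cmod z)^2) * (1 - (cmod w)^2) \<le> (1 - (cmod h1)^2) * (1 - (cmod h2)^2) * (cmod (1 - z * cnj w))^2"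
    apply (rule R_ineq[of "cmod N1" "cmod N2" k])
    using N k zw ez ew CS unfolding S11 S22 S12 by auto
  thus ?thesis using h1 h2 unfolding h1_def h2_def by blast
qed


lemma nz: "cmod x < 1 \<Longrightarrow> cmod y \<le> 1 \<Longrightarrow> 1 - x * y \<noteq> 0"
proof
  assume a: "cmod x < 1" "cmod y \<le> 1" "1 - x * y = 0"
  hence "x * y = 1" by simp
  hence "cmod x * cmod y = 1" by (metis norm_mult norm_one)
  moreover have "cmod x * cmod y \<le> cmod x" using a(2) by (simp add: mult_left_le)
  ultimately show False using a(1) by simp
qed

definition tri :: "complex \<Rightarrow> complex \<Rightarrow> complex \<Rightarrow> nat \<Rightarrow> complex" where
  "tri a z w = (\<lambda>i. if i = 0 then a else if i = 1 then z else w)"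

definition hfun :: "(complex \<Rightarrow> complex) \<Rightarrow> complex \<Rightarrow> complex \<Rightarrow> complex" where
  "hfun f a y = (f y - f a) / ((1 - cnj (f a) * f y) * (y - a) / (1 - y * cnj a))"

lemma bform_schur:
  assumes "P 0 0 \<noteq> 0"
  defines "u \<equiv> \<lambda>i. if i = 0 then - cnj (P 1 0 / P 0 0) else if i = (1::nat) then 1 else 0"
  and "v \<equiv> \<lambda>i. if i = 0 then - cnj (P 2 0 / P 0 0) else if i = (2::nat) then 1 else 0"
  shows "bform P u v = P 1 2 - P 1 0 * P 0 2 / P 0 0"
    "bform P u u = P 1 1 - P 1 0 * P 0 1 / P 0 0"
    "bform P v v = P 2 2 - P 2 0 * P 0 2 / P 0 0"
  using assms(1) by (simp_all add: bform_def sum3 u_def v_def field_simps)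

lemma triple_main:
  assumes psd: "psd_matrix 3 (pick_matrix f (tri a z w))"
  and a: "cmod a < 1" and z: "cmod z < 1" and w: "cmod w < 1" and za: "z \<noteq> a" and wa: "w \<noteq> a"
  and fa: "cmod (f a) < 1" and fz: "cmod (f z) \<le> 1" and fw: "cmod (f w) \<le> 1"
  shows "cmod (hfun f a z) \<le> 1 \<and> cmod (hfun f a z - hfun f a w) * cmod (1 - z * cnj w) \<le> 2 * cmod (z - w)"
proof -
  define P where "P = pick_matrix f (tri a z w)"
  have Pe: "P 0 0 = (1 - f a * cnj (f a)) / (1 - a * cnj a)"
    "P 1 0 = (1 - f z * cnj (f a)) / (1 - z * cnj a)"
    "P 0 1 = (1 - f a * cnj (f z)) / (1 - a * cnj z)"
    "P 2 0 = (1 - f w * cnj (f a)) / (1 - w * cnj a)"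
    "P 0 2 = (1 - f a * cnj (f w)) / (1 - a * cnj w)"
    "P 1 1 = (1 - f z * cnj (f z)) / (1 - z * cnj z)"
    "P 2 2 = (1 - f w * cnj (f w)) / (1 - w * cnj w)"
    "P 1 2 = (1 - f z * cnj (f w)) / (1 - z * cnj w)"
    by (simp_all add: P_def pick_matrix_def tri_def)
  have cn: "cmod (cnj x) < 1" if "cmod x < 1" for x using that by simp
  have d1: "1 - a * cnj a \<noteq> 0" "1 - z * cnj a \<noteq> 0" "1 - a * cnj w \<noteq> 0" "1 - z * cnj w \<noteq> 0"
     "1 - f a * cnj (f a) \<noteq> 0" "1 - a * cnj z \<noteq> 0" "1 - z * cnj z \<noteq> 0" "1 - w * cnj a \<noteq> 0" "1 - w * cnj w \<noteq> 0"
    using nz[of a "cnj a"] nz[of z "cnj a"] nz[of a "cnj w"] nz[of z "cnj w"] nz[of "f a" "cnj (f a)"]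
      nz[of a "cnj z"] nz[of z "cnj z"] nz[of w "cnj a"] nz[of w "cnj w"] a z w fa by auto
  have P00: "P 0 0 \<noteq> 0" using d1 Pe(1) by simp
  have herm: "\<And>i j. P j i = cnj (P i j)" unfolding P_def by (rule pick_herm)
  have psdP: "psd_matrix 3 P" using psd P_def by simp
  define u where "u \<equiv> \<lambda>i. if i = 0 then - cnj (P 1 0 / P 0 0) else if i = (1::nat) then 1 else 0"
  define v where "v \<equiv> \<lambda>i. if i = 0 then - cnj (P 2 0 / P 0 0) else if i = (2::nat) then 1 else 0"
  note sch = bform_schur[of P, OF P00, folded u_def v_def]
  have CS: "(cmod (bform P u v))^2 \<le> Re (bform P u u) * Re (bform P v v)"
    by (rule bform_CS[OF psdP herm])
  have p1: "Re (bform P u u) \<ge> 0" and p2: "Re (bform P v v) \<ge> 0" using psd_bform[OF psdP] by auto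
  define k where "k = 1 - (cmod (f a))^2"
  have kpos: "k > 0" using fa unfolding k_def by (simp add: power_less_one_iff abs_square_less_1)
  have kc: "of_real k = 1 - f a * cnj (f a)" unfolding k_def using complex_norm_square[of "f a"] by simp
  define Nz where "Nz = (1 - cnj (f a) * f z) * (z - a) / (1 - z * cnj a)"
  define Nw where "Nw = (1 - cnj (f a) * f w) * (w - a) / (1 - w * cnj a)"
  have cNz: "cnj Nz = (1 - f a * cnj (f z)) * (cnj z - cnj a) / (1 - a * cnj z)"
    unfolding Nz_def by (simp add: mult.commute)
  have cNw: "cnj Nw = (1 - f a * cnj (f w)) * (cnj w - cnj a) / (1 - a * cnj w)"
    unfolding Nw_def by (simp add: mult.commute)
  have Nz0: "Nz \<noteq> 0" unfolding Nz_def using nz[of "cnj (f a)" "f z"] fa fz za d1 by auto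
  have Nw0: "Nw \<noteq> 0" unfolding Nw_def using nz[of "cnj (f a)" "f w"] fa fw wa d1 by auto
  have e12: "bform P u v * of_real k * (1 - z * cnj w) = Nz * cnj Nw - (f z - f a) * cnj (f w - f a)"
    unfolding sch Pe kc complex_cnj_diff unfolding cNw unfolding Nz_def
    by (rule key_id) (use d1 in auto)
  have e11: "bform P u u * of_real k * (1 - z * cnj z) = Nz * cnj Nz - (f z - f a) * cnj (f z - f a)"
    unfolding sch Pe kc complex_cnj_diff unfolding cNz unfolding Nz_def
    by (rule key_id) (use d1 in auto)
  have e22: "bform P v v * of_real k * (1 - w * cnj w) = Nw * cnj Nw - (f w - f a) * cnj (f w - f a)"
    unfolding sch Pe kc complex_cnj_diff unfolding cNw unfolding Nw_def
    by (rule key_id) (use d1 in auto)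
  have G: "cmod ((f z - f a)/Nz) \<le> 1 \<and> cmod ((f w - f a)/Nw) \<le> 1 \<and> (cmod (1 - ((f z - f a)/Nz) * cnj ((f w - f a)/Nw)))^2 * (1 - (cmod z)^2) * (1 - (cmod w)^2) \<le> (1 - (cmod ((f z - f a)/Nz))^2) * (1 - (cmod ((f w - f a)/Nw))^2) * (cmod (1 - z * cnj w))^2"
    by (rule GL[OF kpos z w d1(4) Nz0 Nw0 CS p1 p2 e12 e11 e22])
  have hz: "hfun f a z = (f z - f a)/Nz" and hw: "hfun f a w = (f w - f a)/Nw"
    unfolding hfun_def Nz_def Nw_def by simp_all
  have "cmod ((f z - f a)/Nz - (f w - f a)/Nw) * cmod (1 - z * cnj w) \<le> 2 * cmod (z - w)"
    by (rule pure_L[OF conjunct1[OF G] conjunct1[OF conjunct2[OF G]] conjunct2[OF conjunct2[OF G]]])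
  thus ?thesis unfolding hz hw using conjunct1[OF G] by (rule conjI[rotated])
qed

lemma div_mult_back: "(N::complex) \<noteq> 0 \<Longrightarrow> M = (M / N) * N" by simp

lemma quot_helper: "(d::complex) \<noteq> 0 \<Longrightarrow> h * A / b = h * (A * d / b) / d"
  by simp

lemma exists_other:
  assumes "open U" "x \<in> U" "finite F"
  shows "\<exists>y\<in>U. y \<notin> (F::complex set)"
proof (rule ccontr)
  assume "\<not> ?thesis"
  hence "U \<subseteq> F" by auto
  hence "finite U" using assms(3) finite_subset by blast
  hence "\<not> x islimpt U" using islimpt_finite by blast
  moreover have "x islimpt U" using assms(1,2) by (simp add: interior_limit_point interior_open)
  ultimately show False by simp
qed

lemma psd_tri:
  assumes H: "\<forall>z. (\<forall>i<3. z i \<in> U) \<and> inj_on z {..<3} \<longrightarrow> psd_matrix 3 (pick_matrix f z)"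
  and "a \<in> U" "z \<in> U" "w \<in> U" "a \<noteq> z" "a \<noteq> w" "z \<noteq> w"
  shows "psd_matrix 3 (pick_matrix f (tri a z w))"
proof -
  have l3: "{..<3::nat} = {0,1,2}" by (auto simp: eval_nat_numeral less_Suc_eq)
  have "\<forall>i<3. tri a z w i \<in> U"
  proof (intro allI impI)
    fix i :: nat assume "i < 3"
    hence "i = 0 \<or> i = 1 \<or> i = 2" by (auto simp: eval_nat_numeral less_Suc_eq)
    thus "tri a z w i \<in> U" using assms(2-4) by (auto simp: tri_def)
  qed
  moreover have "inj_on (tri a z w) {..<3}" unfolding l3 using assms(5-7) by (auto simp: inj_on_def tri_def)
  ultimately show ?thesis using H by blast
qed

lemma fbound:
  assumes H: "\<forall>z. (\<forall>i<3. z i \<in> U) \<and> inj_on z {..<3} \<longrightarrow> psd_matrix 3 (pick_matrix f z)"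
  and oU: "open U" and sU: "U \<subseteq> ball 0 1" and zU: "z \<in> U"
  shows "cmod (f z) \<le> 1"
proof -
  obtain w1 where w1: "w1 \<in> U" "w1 \<notin> {z}" using exists_other[OF oU zU, of "{z}"] by auto
  obtain w2 where w2: "w2 \<in> U" "w2 \<notin> {z, w1}" using exists_other[OF oU zU, of "{z, w1}"] by auto
  have psd: "psd_matrix 3 (pick_matrix f (tri z w1 w2))"
    by (rule psd_tri[OF H zU w1(1) w2(1)]) (use w1 w2 in auto)
  define u :: "nat \<Rightarrow> complex" where "u = (\<lambda>i. if i = 0 then 1 else 0)"
  have "bform (pick_matrix f (tri z w1 w2)) u u = (1 - f z * cnj (f z)) / (1 - z * cnj z)"
    by (simp add: bform_def sum3 u_def pick_matrix_def tri_def)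
  also have "\<dots> = of_real ((1 - (cmod (f z))^2) / (1 - (cmod z)^2))"
    using complex_norm_square[of "f z"] complex_norm_square[of z] by simp
  finally have "Re (bform (pick_matrix f (tri z w1 w2)) u u) = (1 - (cmod (f z))^2) / (1 - (cmod z)^2)" by simp
  hence "0 \<le> (1 - (cmod (f z))^2) / (1 - (cmod z)^2)" using psd_bform[OF psd, of u] by simp
  moreover have "1 - (cmod z)^2 > 0" using zU sU by (auto simp: power_less_one_iff abs_square_less_1)
  ultimately have "(cmod (f z))^2 \<le> 1" by (simp add: zero_le_divide_iff)
  thus ?thesis by (simp add: power_le_one_iff abs_square_le_1)
qed

lemma degenerate_const:
  assumes H: "\<forall>z. (\<forall>i<3. z i \<in> U) \<and> inj_on z {..<3} \<longrightarrow> psd_matrix 3 (pick_matrix f z)"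
  and oU: "open U" and sU: "U \<subseteq> ball 0 1" and aU: "a \<in> U" and fa: "cmod (f a) = 1"
  and zU: "z \<in> U"
  shows "f z = f a"
proof (cases "z = a")
  case False
  obtain w where w: "w \<in> U" "w \<notin> {a, z}" using exists_other[OF oU zU, of "{a, z}"] by auto
  have psd: "psd_matrix 3 (pick_matrix f (tri a z w))"
    by (rule psd_tri[OF H aU zU w(1)]) (use w False in auto)
  define P where "P = pick_matrix f (tri a z w)"
  define e0 :: "nat \<Rightarrow> complex" where "e0 = (\<lambda>i. if i = 0 then 1 else 0)"
  define e1 :: "nat \<Rightarrow> complex" where "e1 = (\<lambda>i. if i = 1 then 1 else 0)"
  have CS: "(cmod (bform P e0 e1))^2 \<le> Re (bform P e0 e0) * Re (bform P e1 e1)"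
    unfolding P_def by (rule bform_CS[OF psd pick_herm])
  have faa: "f a * cnj (f a) = 1" using complex_norm_square[of "f a"] fa by simp
  have "bform P e0 e0 = (1 - f a * cnj (f a)) / (1 - a * cnj a)"
    by (simp add: bform_def sum3 e0_def P_def pick_matrix_def tri_def)
  hence "bform P e0 e0 = 0" using faa by simp
  hence "cmod (bform P e0 e1) = 0" using CS by simp
  moreover have "bform P e0 e1 = (1 - f a * cnj (f z)) / (1 - a * cnj z)"
    by (simp add: bform_def sum3 e0_def e1_def P_def pick_matrix_def tri_def)
  moreover have "1 - a * cnj z \<noteq> 0"
  proof -
    have "cmod a < 1" "cmod z < 1" using aU zU sU by (auto simp: subset_iff)
    thus ?thesis using nz[of a "cnj z"] by simp
  qed
  ultimately have "f a * cnj (f z) = 1" by simp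
  hence "f a * cnj (f z) = f a * cnj (f a)" using faa by simp
  moreover have "f a \<noteq> 0" using fa by auto
  ultimately have "cnj (f z) = cnj (f a)" by simp
  thus ?thesis by simp
qed simp

lemma at_within_punct: "at a within (S - {a}) = at a within S"
  by (simp add: at_within_def)

lemma hind_deriv:
  assumes H: "\<forall>z. (\<forall>i<3. z i \<in> U) \<and> inj_on z {..<3} \<longrightarrow> psd_matrix 3 (pick_matrix f z)"
  and oU: "open U" and sU: "U \<subseteq> ball 0 1" and aU: "a \<in> U"
  shows "\<exists>f'. (f has_field_derivative f') (at a)"
proof -
  have fb: "\<And>z. z \<in> U \<Longrightarrow> cmod (f z) \<le> 1" using fbound[OF H oU sU] by blast
  have a1: "cmod a < 1" using aU sU by auto
  show ?thesis
  proof (cases "cmod (f a) = 1")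
    case True
    have "((\<lambda>_. f a) has_field_derivative 0) (at a)" by simp
    hence "(f has_field_derivative 0) (at a)"
      by (rule has_field_derivative_transform_within_open[OF _ oU aU])
         (use degenerate_const[OF H oU sU aU True] in auto)
    thus ?thesis by blast
  next
    case False
    hence fa: "cmod (f a) < 1" using fb[OF aU] by simp
    obtain e where e: "e > 0" "ball a e \<subseteq> U" using oU aU open_contains_ball by blast
    define r where "r = min e ((1 - cmod a) / 2)"
    define \<rho> where "\<rho> = (1 + cmod a) / 2"
    have r0: "r > 0" using e a1 by (simp add: r_def)
    have rU: "ball a r \<subseteq> U" using e by (auto simp: r_def)
    have rho1: "\<rho> < 1" using a1 by (simp add: \<rho>_def)
    have inrho: "cmod y < \<rho>" if "y \<in> ball a r" for y
    proof -
      have 1: "cmod y \<le> cmod a + cmod (y - a)" by (rule norm_triangle_sub)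
      have 2: "cmod (y - a) < r" using that by (simp add: dist_norm norm_minus_commute)
      have 3: "r \<le> (1 - cmod a) / 2" unfolding r_def by (rule min.cobounded2)
      show ?thesis using 1 2 3 unfolding \<rho>_def by argo
    qed
    have lowb: "cmod (1 - y * cnj x) \<ge> 1 - \<rho>" if "y \<in> ball a r" "cmod x \<le> 1" for x y
    proof -
      have "cmod (y * cnj x) \<le> cmod y" using that(2) by (simp add: norm_mult mult_left_le)
      hence "cmod (y * cnj x) < \<rho>" using inrho[OF that(1)] by simp
      moreover have "1 - cmod (y * cnj x) \<le> cmod (1 - y * cnj x)"
        using norm_triangle_ineq2[of 1 "y * cnj x"] by simp
      ultimately show ?thesis by simp
    qed
    define T where "T = ball a r - {a}"
    define h where "h = hfun f a"
    have hT: "cmod (h z) \<le> 1 \<and> cmod (h z - h w) * cmod (1 - z * cnj w) \<le> 2 * cmod (z - w)"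
      if "z \<in> T" "w \<in> T" "z \<noteq> w" for z w
    proof -
      have zU: "z \<in> U" "w \<in> U" using that rU by (auto simp: T_def)
      have zb: "z \<in> ball a r" "w \<in> ball a r" and za: "z \<noteq> a" "w \<noteq> a" using that by (auto simp: T_def)
      have z1: "cmod z < 1" using inrho[OF zb(1)] rho1 by simp
      have w1: "cmod w < 1" using inrho[OF zb(2)] rho1 by simp
      have psd: "psd_matrix 3 (pick_matrix f (tri a z w))"
        by (rule psd_tri[OF H aU zU(1) zU(2)]) (use za that(3) in auto)
      show ?thesis unfolding h_def
        by (rule triple_main[OF psd a1 z1 w1 za(1) za(2) fa fb[OF zU(1)] fb[OF zU(2)]])
    qed
    have lip: "(2 / (1 - \<rho>))-lipschitz_on T h"
    proof (rule lipschitz_onI)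
      fix z w assume zw: "z \<in> T" "w \<in> T"
      show "dist (h z) (h w) \<le> 2 / (1 - \<rho>) * dist z w"
      proof (cases "z = w")
        case False
        have l: "cmod (1 - z * cnj w) \<ge> 1 - \<rho>" by (rule lowb) (use zw inrho[of w] rho1 in \<open>auto simp: T_def\<close>)
        have "cmod (h z - h w) * (1 - \<rho>) \<le> cmod (h z - h w) * cmod (1 - z * cnj w)"
          using l by (simp add: mult_left_mono)
        also have "\<dots> \<le> 2 * cmod (z - w)" using hT[OF zw False] by simp
        finally have "cmod (h z - h w) \<le> 2 * cmod (z - w) / (1 - \<rho>)" using rho1 by (simp add: field_simps)
        thus ?thesis by (simp add: dist_norm)
      qed simp
    next
      show "0 \<le> 2 / (1 - \<rho>)" using rho1 by simp
    qed
    have uc: "uniformly_continuous_on T h" by (rule lipschitz_on_uniformly_continuous[OF lip])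
    have acl: "a \<in> closure T"
    proof -
      have "a islimpt ball a r" using r0 by (simp add: islimpt_ball)
      hence "a islimpt T" unfolding T_def using islimpt_punctured[of a "ball a r"] by blast
      thus ?thesis unfolding closure_def by blast
    qed
    obtain L where L: "(h \<longlongrightarrow> L) (at a within T)"
      using uniformly_continuous_on_extension_at_closure[OF uc acl] by blast
    have "at a within T = at a within ball a r" unfolding T_def by (rule at_within_punct)
    also have "\<dots> = at a" by (rule at_within_open) (use r0 in auto)
    finally have atT: "at a within T = at a" .
    have hL: "(h \<longlongrightarrow> L) (at a)" using L atT by simp
    have Nne: "(1 - cnj (f a) * f y) * (y - a) / (1 - y * cnj a) \<noteq> 0" if "y \<in> T" for y
    proof -
      have yU: "y \<in> U" using that rU by (auto simp: T_def)
      have "1 - cnj (f a) * f y \<noteq> 0" using nz[of "cnj (f a)" "f y"] fa fb[OF yU] by simp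
      moreover have "1 - y * cnj a \<noteq> 0" using nz[of y "cnj a"] yU sU a1 by auto
      moreover have "y - a \<noteq> 0" using that by (simp add: T_def)
      ultimately show ?thesis by simp
    qed
    have rep: "f y - f a = h y * ((1 - cnj (f a) * f y) * (y - a) / (1 - y * cnj a))" if "y \<in> T" for y
      unfolding h_def hfun_def by (rule div_mult_back[OF Nne[OF that]])
    have bnd: "cmod (f y - f a) \<le> (2 / (1 - \<rho>)) * cmod (y - a)" if "y \<in> T" for y
    proof -
      have yU: "y \<in> U" using that rU by (auto simp: T_def)
      have oT: "open T" unfolding T_def by (simp add: open_delete)
      obtain w where w: "w \<in> T" "w \<notin> {y}" using exists_other[OF oT \<open>y \<in> T\<close>, of "{y}"] by blast
      have hy: "cmod (h y) \<le> 1" using hT[of y w] that w by simp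
      have n1: "cmod (1 - cnj (f a) * f y) \<le> 2"
      proof -
        have "cmod (1 - cnj (f a) * f y) \<le> cmod (1::complex) + cmod (cnj (f a) * f y)" by (rule norm_triangle_ineq4)
        also have "\<dots> = 1 + cmod (f a) * cmod (f y)" by (simp add: norm_mult)
        also have "cmod (f a) * cmod (f y) \<le> 1" using fa fb[OF yU] by (simp add: mult_le_one)
        finally show ?thesis by simp
      qed
      have l: "cmod (1 - y * cnj a) \<ge> 1 - \<rho>" by (rule lowb) (use that a1 in \<open>auto simp: T_def\<close>)
      have "cmod (f y - f a) = cmod (h y) * (cmod (1 - cnj (f a) * f y) * cmod (y - a) / cmod (1 - y * cnj a))"
        using rep[OF that] by (simp add: norm_mult norm_divide)
      also have "\<dots> \<le> 1 * (2 * cmod (y - a) / (1 - \<rho>))"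
      proof (rule mult_mono)
        show "cmod (1 - cnj (f a) * f y) * cmod (y - a) / cmod (1 - y * cnj a) \<le> 2 * cmod (y - a) / (1 - \<rho>)"
        proof (rule frac_le)
          show "0 \<le> 2 * cmod (y - a)" by simp
          show "cmod (1 - cnj (f a) * f y) * cmod (y - a) \<le> 2 * cmod (y - a)"
            using n1 by (rule mult_right_mono) simp
          show "0 < 1 - \<rho>" using rho1 by simp
          show "1 - \<rho> \<le> cmod (1 - y * cnj a)" by (rule l)
        qed
      qed (use hy in auto)
      finally show ?thesis by simp
    qed
    have ev: "eventually (\<lambda>y. y \<in> T) (at a)"
      unfolding eventually_at using r0 by (intro exI[of _ r]) (auto simp: T_def dist_commute)
    have fcont: "(f \<longlongrightarrow> f a) (at a)"
    proof -
      have "((\<lambda>y. f y - f a) \<longlongrightarrow> 0) (at a)"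
      proof (rule Lim_null_comparison)
        show "\<forall>\<^sub>F y in at a. cmod (f y - f a) \<le> (2 / (1 - \<rho>)) * cmod (y - a)"
          using ev by eventually_elim (rule bnd)
        have "((\<lambda>y. (2 / (1 - \<rho>)) * cmod (y - a)) \<longlongrightarrow> (2 / (1 - \<rho>)) * cmod (a - a)) (at a)"
          by (intro tendsto_intros)
        thus "((\<lambda>y. (2 / (1 - \<rho>)) * cmod (y - a)) \<longlongrightarrow> 0) (at a)" by simp
      qed
      thus ?thesis by (simp add: Lim_null[symmetric])
    qed
    have qlim: "((\<lambda>y. h y * (1 - cnj (f a) * f y) / (1 - y * cnj a)) \<longlongrightarrow> L * (1 - cnj (f a) * f a) / (1 - a * cnj a)) (at a)"
      using nz[of a "cnj a"] a1
      by (intro tendsto_intros hL fcont) auto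
    have "((\<lambda>y. (f y - f a) / (y - a)) \<longlongrightarrow> L * (1 - cnj (f a) * f a) / (1 - a * cnj a)) (at a)"
    proof (rule Lim_transform_within_open[OF qlim _ _ ])
      show "open (ball a r)" by simp
      show "a \<in> ball a r" using r0 by simp
      fix y assume y: "y \<in> ball a r" "y \<noteq> a"
      hence yT: "y \<in> T" by (simp add: T_def)
      have "1 - y * cnj a \<noteq> 0" using nz[of y "cnj a"] inrho[OF y(1)] rho1 a1 by simp
      show "h y * (1 - cnj (f a) * f y) / (1 - y * cnj a) = (f y - f a) / (y - a)"
        unfolding rep[OF yT] by (rule quot_helper) (use y in simp)
    qed
    thus ?thesis by (auto simp: has_field_derivative_iff)
  qed
qed

lemma hindmarsh:
  assumes H: "\<forall>z. (\<forall>i<3. z i \<in> U) \<and> inj_on z {..<3} \<longrightarrow> psd_matrix 3 (pick_matrix f z)"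
  and oU: "open U" and sU: "U \<subseteq> ball 0 1"
  shows "f holomorphic_on U \<and> (\<forall>z\<in>U. cmod (f z) \<le> 1)"
  using hind_deriv[OF H oU sU] fbound[OF H oU sU] by (simp add: holomorphic_on_open[OF oU])

lemma ev_ball:
  assumes "r > 0" "\<And>z. z \<in> ball x r - {x} \<Longrightarrow> P z"
  shows "eventually P (at x)"
  unfolding eventually_at using assms by (intro exI[of _ r]) (auto simp: dist_commute)

lemma discrete_sep:
  assumes "\<not> x islimpt Z"
  obtains e where "e > 0" "\<forall>y\<in>Z. y \<noteq> x \<longrightarrow> e \<le> dist y x"
  using assms unfolding islimpt_approachable by (auto simp: not_less)

lemma open_diff_discrete:
  assumes oD: "open D" and dZ: "discrete_in Z D"
  shows "open (D - Z)"
  unfolding open_contains_ball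
proof
  fix y assume y: "y \<in> D - Z"
  have "\<not> y islimpt Z" using dZ y unfolding discrete_in_def by blast
  then obtain e where e: "e > 0" "\<forall>x\<in>Z. x \<noteq> y \<longrightarrow> e \<le> dist x y" by (rule discrete_sep)
  obtain d where d: "d > 0" "ball y d \<subseteq> D" using oD y open_contains_ball by blast
  have "ball y (min d e) \<subseteq> D - Z"
  proof
    fix x assume x: "x \<in> ball y (min d e)"
    have "x \<in> D" using x d by auto
    moreover have "x \<notin> Z"
    proof
      assume "x \<in> Z"
      moreover have "x \<noteq> y" using y \<open>x \<in> Z\<close> by auto
      ultimately have "e \<le> dist x y" using e by blast
      moreover have "dist x y < e" using x by (simp add: dist_commute)
      ultimately show False by simp
    qed
    ultimately show "x \<in> D - Z" by simp
  qed
  moreover have "min d e > 0" using d e by simp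
  ultimately show "\<exists>e>0. ball y e \<subseteq> D - Z" by blast
qed

lemma step_extend:
  assumes oD: "open D" and dZ: "discrete_in Z D" and g: "g holomorphic_on (D - Z)"
    and gb: "\<forall>z\<in>D - Z. cmod (g z) \<le> 1"
  shows "\<exists>G. G holomorphic_on D \<and> (\<forall>z\<in>D. cmod (G z) \<le> 1) \<and> (\<forall>z\<in>D - Z. G z = g z)"
proof -
  have loc: "\<exists>r GX. r > 0 \<and> ball x r \<subseteq> D \<and> (\<forall>y\<in>ball x r. y \<in> Z \<longrightarrow> y = x) \<and>
      GX holomorphic_on ball x r \<and> (\<forall>z\<in>ball x r - {x}. GX z = g z)" if x: "x \<in> Z" for x
  proof -
    have xD: "x \<in> D" using x dZ unfolding discrete_in_def by blast
    have "\<not> x islimpt Z" using dZ xD unfolding discrete_in_def by blast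
    then obtain e where e: "e > 0" "\<forall>y\<in>Z. y \<noteq> x \<longrightarrow> e \<le> dist y x" by (rule discrete_sep)
    obtain d where d: "d > 0" "ball x d \<subseteq> D" using oD xD open_contains_ball by blast
    define r where "r = min d e"
    have r0: "r > 0" using d e by (simp add: r_def)
    have rD: "ball x r \<subseteq> D" using d by (auto simp: r_def)
    have rZ: "\<forall>y\<in>ball x r. y \<in> Z \<longrightarrow> y = x"
    proof (intro ballI impI)
      fix y assume y: "y \<in> ball x r" "y \<in> Z"
      show "y = x"
      proof (rule ccontr)
        assume "y \<noteq> x"
        hence "e \<le> dist y x" using e y by blast
        moreover have "dist y x < e" using y(1) by (simp add: r_def dist_commute)
        ultimately show False by simp
      qed
    qed
    have sub: "ball x r - {x} \<subseteq> D - Z" using rD rZ by blast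
    have gh: "g holomorphic_on ball x r - {x}" using g sub by (rule holomorphic_on_subset)
    have xi: "x \<in> interior (ball x r)" using r0 by (simp add: interior_open)
    have "\<exists>B. eventually (\<lambda>z. norm (g z) \<le> B) (at x)"
    proof (intro exI)
      show "eventually (\<lambda>z. norm (g z) \<le> 1) (at x)"
      proof (rule ev_ball[OF r0])
        fix z assume "z \<in> ball x r - {x}"
        hence "z \<in> D - Z" using sub by blast
        thus "norm (g z) \<le> 1" using gb by blast
      qed
    qed
    then obtain GX where GX: "GX holomorphic_on ball x r" "\<forall>z\<in>ball x r - {x}. GX z = g z"
      using holomorphic_on_extend_bounded[OF gh xi] by blast
    show ?thesis using r0 rD rZ GX by blast
  qed
  then obtain R GX where RG: "\<And>x. x \<in> Z \<Longrightarrow> R x > 0 \<and> ball x (R x) \<subseteq> D \<and> (\<forall>y\<in>ball x (R x). y \<in> Z \<longrightarrow> y = x) \<and>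
      GX x holomorphic_on ball x (R x) \<and> (\<forall>z\<in>ball x (R x) - {x}. GX x z = g z)"
    by metis
  define G where "G = (\<lambda>y. if y \<in> Z then GX y y else g y)"
  have GeqX: "G y = GX x y" if "x \<in> Z" "y \<in> ball x (R x)" for x y
  proof (cases "y = x")
    case True thus ?thesis using that by (simp add: G_def)
  next
    case False
    hence "y \<notin> Z" using RG[OF that(1)] that(2) by blast
    thus ?thesis using RG[OF that(1)] that(2) False by (simp add: G_def)
  qed
  have Ghol: "G holomorphic_on D"
    unfolding holomorphic_on_open[OF oD]
  proof
    fix y assume yD: "y \<in> D"
    show "\<exists>f'. (G has_field_derivative f') (at y)"
    proof (cases "y \<in> Z")
      case True
      have R: "R y > 0" and hol: "GX y holomorphic_on ball y (R y)" using RG[OF True] by blast+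
      have yb: "y \<in> ball y (R y)" using R by simp
      have "\<exists>f'. (GX y has_field_derivative f') (at y)"
        using hol yb unfolding holomorphic_on_open[OF open_ball] by blast
      then obtain f' where "(GX y has_field_derivative f') (at y)" by blast
      hence "(G has_field_derivative f') (at y)"
        by (rule has_field_derivative_transform_within_open[of _ _ _ "ball y (R y)"])
           (use R GeqX[OF True] in auto)
      thus ?thesis by blast
    next
      case False
      have o: "open (D - Z)" by (rule open_diff_discrete[OF oD dZ])
      have yDZ: "y \<in> D - Z" using yD False by simp
      have "\<exists>f'. (g has_field_derivative f') (at y)"
        using g yDZ unfolding holomorphic_on_open[OF o] by blast
      then obtain f' where "(g has_field_derivative f') (at y)" by blast
      hence "(G has_field_derivative f') (at y)"
        by (rule has_field_derivative_transform_within_open[OF _ o yDZ]) (simp add: G_def)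
      thus ?thesis by blast
    qed
  qed
  have Gb: "\<forall>z\<in>D. cmod (G z) \<le> 1"
  proof
    fix y assume yD: "y \<in> D"
    show "cmod (G y) \<le> 1"
    proof (cases "y \<in> Z")
      case True
      have R: "R y > 0" and hol: "GX y holomorphic_on ball y (R y)"
        and eq: "\<forall>z\<in>ball y (R y) - {y}. GX y z = g z" and sub: "ball y (R y) \<subseteq> D"
        and rZ: "\<forall>w\<in>ball y (R y). w \<in> Z \<longrightarrow> w = y" using RG[OF True] by blast+
      have "continuous_on (ball y (R y)) (GX y)" using hol by (rule holomorphic_on_imp_continuous_on)
      hence "isCont (GX y) y" using R by (simp add: continuous_on_eq_continuous_at)
      hence lim: "(GX y \<longlongrightarrow> GX y y) (at y)" by (simp add: isCont_def)
      have ev: "eventually (\<lambda>z. norm (GX y z) \<le> 1) (at y)"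
      proof (rule ev_ball[OF R])
        fix z assume zb: "z \<in> ball y (R y) - {y}"
        hence "z \<in> D - Z" using sub rZ by blast
        moreover have "GX y z = g z" using eq zb by blast
        ultimately show "norm (GX y z) \<le> 1" using gb by simp
      qed
      have "norm (GX y y) \<le> 1" by (rule Lim_norm_ubound[OF _ lim ev]) simp
      thus ?thesis using True by (simp add: G_def)
    next
      case False
      thus ?thesis using gb yD by (simp add: G_def)
    qed
  qed
  have "\<forall>z\<in>D - Z. G z = g z" by (simp add: G_def)
  thus ?thesis using Ghol Gb by blast
qed

lemma D_props:
  fixes D Z :: "nat \<Rightarrow> complex set"
  assumes "D 0 = ball 0 1"
    and "\<And>j. D (Suc j) = D j - Z j"
    and "\<And>j. discrete_in (Z j) (D j)"
  shows "open (D j) \<and> D j \<subseteq> ball 0 1"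
proof (induction j)
  case 0 thus ?case using assms(1) by simp
next
  case (Suc j)
  have "open (D j - Z j)" using Suc assms(3)[of j] by (intro open_diff_discrete) auto
  moreover have "D j - Z j \<subseteq> ball 0 1" using Suc by blast
  ultimately show ?case using assms(2)[of j] by simp
qed

lemma ext_all:
  fixes D Z :: "nat \<Rightarrow> complex set"
  assumes D0: "D 0 = ball 0 1"
    and DS: "\<And>j. D (Suc j) = D j - Z j"
    and dZ: "\<And>j. discrete_in (Z j) (D j)"
  shows "\<forall>g. g holomorphic_on D j \<and> (\<forall>z\<in>D j. cmod (g z) \<le> 1) \<longrightarrow> (\<exists>S. schur_function S \<and> (\<forall>w\<in>D j. S w = g w))"
proof (induction j)
  case 0
  show ?case unfolding D0 schur_function_def by blast
next
  case (Suc j)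
  show ?case
  proof (intro allI impI)
    fix g assume g: "g holomorphic_on D (Suc j) \<and> (\<forall>z\<in>D (Suc j). cmod (g z) \<le> 1)"
    have oD: "open (D j)" using D_props[OF D0 DS dZ] by blast
    obtain G where G: "G holomorphic_on D j" "\<forall>z\<in>D j. cmod (G z) \<le> 1" "\<forall>z\<in>D j - Z j. G z = g z"
      using step_extend[OF oD dZ[of j], of g] g unfolding DS by blast
    obtain S where S: "schur_function S" "\<forall>w\<in>D j. S w = G w" using Suc G(1,2) by blast
    have "\<forall>w\<in>D (Suc j). S w = g w" unfolding DS using S(2) G(3) by simp
    thus "\<exists>S. schur_function S \<and> (\<forall>w\<in>D (Suc j). S w = g w)" using S(1) by blast
  qed
qed

theorem corollary6p2:
  fixes D Z :: "nat \<Rightarrow> complex set"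
  assumes "D 0 = ball 0 1"
    and "\<And>j. D (Suc j) = D j - Z j"
    and "\<And>j. discrete_in (Z j) (D j)"
  shows "\<forall>j. hindmarsh_property 3 (D j)"
proof
  fix j
  have P: "open (D j)" "D j \<subseteq> ball 0 1" using D_props[OF assms] by blast+
  show "hindmarsh_property 3 (D j)"
    unfolding hindmarsh_property_def
  proof (intro conjI allI impI)
    show "open (D j)" "D j \<subseteq> ball 0 1" by (rule P(1), rule P(2))
    fix f :: "complex \<Rightarrow> complex"
    assume H: "\<forall>z. (\<forall>i<3. z i \<in> D j) \<and> inj_on z {..<3} \<longrightarrow> psd_matrix 3 (pick_matrix f z)"
    have "f holomorphic_on D j \<and> (\<forall>z\<in>D j. cmod (f z) \<le> 1)" by (rule hindmarsh[OF H P])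
    thus "\<exists>S. schur_function S \<and> (\<forall>w\<in>D j. S w = f w)" using ext_all[OF assms, of j] by blast
  qed
qed

end
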